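(* Let $\mathcal H$ be a hypergraph and let $m\ge l+1$ be integers with $l\ge 0$. Suppose the embedded homology satisfies $H_n(\mathcal H)=0$ for all $l\le n\le m$. Then for every $n$ with $l+1\le n\le m$: (i) $H_n(\Delta\mathcal H,\mathcal H)\cong H_n(\Delta\mathcal H)$; (ii) $H_n(\mathcal H,\delta\mathcal H)\cong H_{n-1}(\delta\mathcal H)$; (iii) there is a short exact sequence $$0\to H_n(\Delta\mathcal H)\to H_n(\Delta\mathcal H,\delta\mathcal H)\to H_{n-1}(\delta\mathcal H)\to 0,$$ where $H_n(\Delta\mathcal H,\delta\mathcal H)$ is the usual simplicial relative homology, isomorphic to the reduced homology $\tilde H_n(|\Delta\mathcal H|/|\delta\mathcal H|)$ of the quotient of geometric realizations. Consequently $0\to H_n(\Delta\mathcal H,\mathcal H)\to \tilde H_n(|\Delta\mathcal H|/|\delta\mathcal H|)\to H_n(\mathcal H,\delta\mathcal H)\to 0$ is exact.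
   Context: A hypergraph is a finite set $\mathcal H$ of nonempty finite subsets of a vertex set; elements are hyperedges, an $n$-hyperedge having $n+1$ vertices. The associated simplicial complex is $\Delta\mathcal H=\{\sigma\ne\emptyset:\sigma\subseteq\tau\text{ for some }\tau\in\mathcal H\}$ and the lower-associated simplicial complex is $\delta\mathcal H=\{\sigma\in\mathcal H:\ \text{every nonempty }\tau\subseteq\sigma\text{ lies in }\mathcal H\}$; thus $\delta\mathcal H\subseteq\mathcal H\subseteq\Delta\mathcal H$. Fix an abelian coefficient group $G$; $C_*(\Delta\mathcal H)$ is the simplicial chain complex with coefficients in $G$ and boundary $\partial$, $G(\mathcal H)_n$ the $G$-linear combinations of $n$-hyperedges, $\mathrm{Inf}_n(\mathcal H)=G(\mathcal H)_n\cap\partial_n^{-1}(G(\mathcal H)_{n-1})$. Embedded homology: $H_n(\mathcal H)=H_n(\mathrm{Inf}_*(\mathcal H))$; for $\mathcal A\subseteq\mathcal B$ relative embedded homology $H_n(\mathcal B,\mathcal A)=H_n(\mathrm{Inf}_*(\mathcal B)/\mathrm{Inf}_*(\mathcal A))$. For simplicial complexes these agree with ordinary simplicial (relative) homology with coefficients in $G$. *)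

theory Defs
  imports "HOL-Algebra.Exact_Sequence"
begin

text \<open>Simplices are finite nonempty sets of vertices; the vertex type is linearly
ordered, which fixes the orientation of every simplex (vertices listed increasingly).
An n-simplex has n+1 vertices. Chains with coefficients in an abelian group 'g are
finitely supported functions from vertex sets to 'g.\<close>

definition assoc_complex :: "'v set set \<Rightarrow> 'v set set" where
  "assoc_complex H = {\<sigma>. \<sigma> \<noteq> {} \<and> (\<exists>\<tau>\<in>H. \<sigma> \<subseteq> \<tau>)}"

definition lower_complex :: "'v set set \<Rightarrow> 'v set set" where
  "lower_complex H = {\<sigma>\<in>H. \<forall>\<tau>. \<tau> \<noteq> {} \<and> \<tau> \<subseteq> \<sigma> \<longrightarrow> \<tau> \<in> H}"

definition is_hypergraph :: "'v set set \<Rightarrow> bool" where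
  "is_hypergraph H \<longleftrightarrow> finite H \<and> (\<forall>\<sigma>\<in>H. finite \<sigma> \<and> \<sigma> \<noteq> {})"

definition chains :: "'v set set \<Rightarrow> nat \<Rightarrow> ('v set \<Rightarrow> 'g::ab_group_add) set" where
  "chains S n = {c. finite {\<sigma>. c \<sigma> \<noteq> 0} \<and> (\<forall>\<sigma>. c \<sigma> \<noteq> 0 \<longrightarrow> \<sigma> \<in> S \<and> card \<sigma> = Suc n)}"

text \<open>Simplicial boundary: the face of \<sigma> obtained by deleting its i-th vertex
(counting from 0 in increasing order) gets sign (-1)^i. Faces are nonempty
(the chain complex is not augmented).\<close>
definition bd :: "('v::linorder set \<Rightarrow> 'g::ab_group_add) \<Rightarrow> 'v set \<Rightarrow> 'g" where
  "bd c \<tau> = (if \<tau> = {} then 0 else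
     (\<Sum>v\<in>{v. v \<notin> \<tau> \<and> c (insert v \<tau>) \<noteq> 0}.
        (if even (card {u\<in>\<tau>. u < v}) then c (insert v \<tau>) else - c (insert v \<tau>))))"

definition Inf :: "'v::linorder set set \<Rightarrow> nat \<Rightarrow> ('v set \<Rightarrow> 'g::ab_group_add) set" where
  "Inf H n = {c \<in> chains H n. n = 0 \<or> bd c \<in> chains H (n - 1)}"

text \<open>Relative homology H_n(Inf(B)/Inf(A)) for A \<subseteq> B, via relative cycles modulo
relative boundaries (the standard description of the homology of a quotient complex).\<close>
definition rel_cycles :: "'v::linorder set set \<Rightarrow> 'v set set \<Rightarrow> nat \<Rightarrow> ('v set \<Rightarrow> 'g::ab_group_add) set" where
  "rel_cycles B A n = {c \<in> Inf B n. n = 0 \<or> bd c \<in> Inf A (n - 1)}"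

definition rel_bounds :: "'v::linorder set set \<Rightarrow> 'v set set \<Rightarrow> nat \<Rightarrow> ('v set \<Rightarrow> 'g::ab_group_add) set" where
  "rel_bounds B A n = {(\<lambda>\<sigma>. bd d \<sigma> + a \<sigma>) | d a. d \<in> Inf B (Suc n) \<and> a \<in> Inf A n}"

definition cycle_group :: "'v::linorder set set \<Rightarrow> 'v set set \<Rightarrow> nat \<Rightarrow> ('v set \<Rightarrow> 'g::ab_group_add) monoid" where
  "cycle_group B A n = \<lparr>carrier = rel_cycles B A n, mult = (\<lambda>x y \<sigma>. x \<sigma> + y \<sigma>), one = (\<lambda>\<sigma>. 0)\<rparr>"

definition rel_emb_homology :: "'v::linorder set set \<Rightarrow> 'v set set \<Rightarrow> nat \<Rightarrow> ('v set \<Rightarrow> 'g::ab_group_add) set monoid" where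
  "rel_emb_homology B A n = cycle_group B A n Mod rel_bounds B A n"

definition emb_homology :: "'v::linorder set set \<Rightarrow> nat \<Rightarrow> ('v set \<Rightarrow> 'g::ab_group_add) set monoid" where
  "emb_homology H n = rel_emb_homology H {} n"

end

theory Submission
  imports Defs "HOL-Library.Function_Algebras"
begin


definition AG :: "('a::ab_group_add) set \<Rightarrow> 'a monoid" where
  "AG S = \<lparr>carrier = S, mult = (+), one = 0\<rparr>"

definition addsub :: "('a::ab_group_add) set \<Rightarrow> bool" where
  "addsub S \<longleftrightarrow> 0 \<in> S \<and> (\<forall>x\<in>S. \<forall>y\<in>S. x + y \<in> S) \<and> (\<forall>x\<in>S. - x \<in> S)"

lemma addsub_diff: "addsub S \<Longrightarrow> x \<in> S \<Longrightarrow> y \<in> S \<Longrightarrow> x - y \<in> S"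
  unfolding addsub_def by (metis diff_conv_add_uminus)

lemma AG_simps[simp]: "carrier (AG S) = S" "mult (AG S) = (+)" "one (AG S) = 0"
  by (simp_all add: AG_def)

lemma AG_comm_group: "addsub S \<Longrightarrow> comm_group (AG S)"
  apply (rule comm_groupI)
  apply (auto simp: addsub_def add.assoc add.commute)
  by (metis add.commute ab_left_minus)

lemma AG_group: "addsub S \<Longrightarrow> group (AG S)"
  using AG_comm_group comm_group.axioms(2) by blast

lemma AG_inv: "addsub S \<Longrightarrow> x \<in> S \<Longrightarrow> inv\<^bsub>AG S\<^esub> x = - x"
  apply (rule group.inv_equality[OF AG_group])
  by (auto simp: addsub_def)

lemma AG_subgroup: "addsub T \<Longrightarrow> T \<subseteq> S \<Longrightarrow> addsub S \<Longrightarrow> subgroup T (AG S)"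
  apply (rule group.subgroupI[OF AG_group])
  apply assumption
  apply simp
  apply (simp add: addsub_def; blast)
  apply (subst AG_inv; auto simp: addsub_def)
  apply (auto simp: addsub_def)
  done

lemma AG_normal: "addsub T \<Longrightarrow> T \<subseteq> S \<Longrightarrow> addsub S \<Longrightarrow> T \<lhd> AG S"
  by (simp add: AG_comm_group AG_subgroup comm_group.subgroup_imp_normal)

lemma AG_rcos: "T #>\<^bsub>AG S\<^esub> a = (\<lambda>t. t + a) ` T"
  by (auto simp: r_coset_def)

lemma AG_rcos_eq: "addsub T \<Longrightarrow> (T #>\<^bsub>AG S\<^esub> a = T #>\<^bsub>AG S'\<^esub> b) \<longleftrightarrow> a - b \<in> T"
proof
  assume T: "addsub T" and e: "T #>\<^bsub>AG S\<^esub> a = T #>\<^bsub>AG S'\<^esub> b"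
  have "a \<in> T #>\<^bsub>AG S\<^esub> a" using T unfolding AG_rcos addsub_def by force
  then obtain t where "t \<in> T" "a = t + b" using e unfolding AG_rcos by auto
  then show "a - b \<in> T" by simp
next
  assume T: "addsub T" and d: "a - b \<in> T"
  have n: "- (a - b) \<in> T" using T d unfolding addsub_def by blast
  show "T #>\<^bsub>AG S\<^esub> a = T #>\<^bsub>AG S'\<^esub> b"
    unfolding AG_rcos
  proof (intro equalityI subsetI)
    fix x assume "x \<in> (\<lambda>t. t + a) ` T"
    then obtain t where t: "t \<in> T" "x = t + a" by blast
    have "t + (a - b) \<in> T" using T t d unfolding addsub_def by blast
    moreover have "x = (t + (a - b)) + b" using t by simp
    ultimately show "x \<in> (\<lambda>t. t + b) ` T" by blast
  next
    fix x assume "x \<in> (\<lambda>t. t + b) ` T"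
    then obtain t where t: "t \<in> T" "x = t + b" by blast
    have "t + - (a - b) \<in> T" using T t n unfolding addsub_def by blast
    moreover have "x = (t + - (a - b)) + a" using t by simp
    ultimately show "x \<in> (\<lambda>t. t + a) ` T" by blast
  qed
qed

lemma AG_rcos_zero: "T #>\<^bsub>AG S\<^esub> 0 = T"
  unfolding AG_rcos by simp

lemma Q_carrier: "carrier (AG S Mod T) = {T #>\<^bsub>AG S\<^esub> a | a. a \<in> S}"
  by (auto simp: FactGroup_def RCOSETS_def)

lemma Q_one: "one (AG S Mod T) = T"
  by (simp add: FactGroup_def)

lemma Q_mult: "addsub T \<Longrightarrow> T \<subseteq> S \<Longrightarrow> addsub S \<Longrightarrow> a \<in> S \<Longrightarrow> b \<in> S \<Longrightarrow>
   (T #>\<^bsub>AG S\<^esub> a) \<otimes>\<^bsub>AG S Mod T\<^esub> (T #>\<^bsub>AG S\<^esub> b) = T #>\<^bsub>AG S\<^esub> (a + b)"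
  using normal.rcos_sum[OF AG_normal, of T S a b] by (simp add: FactGroup_def)

lemma Q_group: "addsub T \<Longrightarrow> T \<subseteq> S \<Longrightarrow> addsub S \<Longrightarrow> group (AG S Mod T)"
  using AG_normal normal.factorgroup_is_group by blast



definition qsetup :: "'a::ab_group_add set \<Rightarrow> 'a set \<Rightarrow> 'a set \<Rightarrow> 'a set \<Rightarrow> ('a \<Rightarrow> 'a) \<Rightarrow> bool" where
  "qsetup S T S' T' \<phi> \<longleftrightarrow> addsub S \<and> addsub T \<and> T \<subseteq> S \<and> addsub S' \<and> addsub T' \<and> T' \<subseteq> S'
     \<and> (\<forall>x\<in>S. \<phi> x \<in> S') \<and> (\<forall>x\<in>S. \<forall>y\<in>S. \<phi> (x + y) = \<phi> x + \<phi> y) \<and> (\<forall>t\<in>T. \<phi> t \<in> T')"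

definition Fq :: "'a::ab_group_add set \<Rightarrow> 'a set \<Rightarrow> ('a \<Rightarrow> 'a) \<Rightarrow> 'a set \<Rightarrow> 'a set" where
  "Fq S' T' \<phi> X = the_elem ((\<lambda>c. T' #>\<^bsub>AG S'\<^esub> \<phi> c) ` X)"

lemma qsetupD:
  assumes "qsetup S T S' T' \<phi>"
  shows "addsub S" "addsub T" "T \<subseteq> S" "addsub S'" "addsub T'" "T' \<subseteq> S'"
    "\<And>x. x\<in>S \<Longrightarrow> \<phi> x \<in> S'" "\<And>x y. x\<in>S \<Longrightarrow> y\<in>S \<Longrightarrow> \<phi> (x + y) = \<phi> x + \<phi> y"
    "\<And>t. t\<in>T \<Longrightarrow> \<phi> t \<in> T'"
  using assms unfolding qsetup_def by blast+

lemma qsetup_diff: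
  assumes "qsetup S T S' T' \<phi>" "x \<in> S" "y \<in> S"
  shows "\<phi> (x - y) = \<phi> x - \<phi> y"
proof -
  have "x - y \<in> S" using assms addsub_diff qsetupD(1) by blast
  then have "\<phi> ((x - y) + y) = \<phi> (x - y) + \<phi> y" using assms qsetupD(8) by blast
  then show ?thesis by (simp add: algebra_simps)
qed

lemma Fq_app:
  assumes st: "qsetup S T S' T' \<phi>" and c: "c \<in> S"
  shows "Fq S' T' \<phi> (T #>\<^bsub>AG S\<^esub> c) = T' #>\<^bsub>AG S'\<^esub> \<phi> c"
proof -
  note D = qsetupD[OF st]
  have "(\<lambda>c. T' #>\<^bsub>AG S'\<^esub> \<phi> c) ` (T #>\<^bsub>AG S\<^esub> c) = {T' #>\<^bsub>AG S'\<^esub> \<phi> c}"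
  proof (intro equalityI subsetI)
    fix X assume "X \<in> (\<lambda>c. T' #>\<^bsub>AG S'\<^esub> \<phi> c) ` (T #>\<^bsub>AG S\<^esub> c)"
    then obtain t where t: "t \<in> T" "X = T' #>\<^bsub>AG S'\<^esub> \<phi> (t + c)" unfolding AG_rcos by auto
    have "t \<in> S" using t D(3) by blast
    then have e: "\<phi> (t + c) = \<phi> t + \<phi> c" using c D(8) by blast
    have "\<phi> t \<in> T'" using t D(9) by blast
    then have "\<phi> (t + c) - \<phi> c \<in> T'" unfolding e by simp
    then have "T' #>\<^bsub>AG S'\<^esub> \<phi> (t + c) = T' #>\<^bsub>AG S'\<^esub> \<phi> c"
      using AG_rcos_eq[OF D(5)] by blast
    then show "X \<in> {T' #>\<^bsub>AG S'\<^esub> \<phi> c}" using t by simp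
  next
    fix X assume "X \<in> {T' #>\<^bsub>AG S'\<^esub> \<phi> c}"
    moreover have "c \<in> T #>\<^bsub>AG S\<^esub> c" using D(2) unfolding AG_rcos addsub_def by force
    ultimately show "X \<in> (\<lambda>c. T' #>\<^bsub>AG S'\<^esub> \<phi> c) ` (T #>\<^bsub>AG S\<^esub> c)" by blast
  qed
  then show ?thesis unfolding Fq_def by simp
qed

lemma Fq_hom:
  assumes st: "qsetup S T S' T' \<phi>"
  shows "Fq S' T' \<phi> \<in> hom (AG S Mod T) (AG S' Mod T')"
proof (rule homI)
  note D = qsetupD[OF st]
  fix X assume "X \<in> carrier (AG S Mod T)"
  then obtain a where a: "a \<in> S" "X = T #>\<^bsub>AG S\<^esub> a" unfolding Q_carrier by blast
  have "\<phi> a \<in> S'" using a D(7) by blast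
  then show "Fq S' T' \<phi> X \<in> carrier (AG S' Mod T')" unfolding Q_carrier a(2) Fq_app[OF st a(1)] by blast
next
  note D = qsetupD[OF st]
  fix X Y assume "X \<in> carrier (AG S Mod T)" "Y \<in> carrier (AG S Mod T)"
  then obtain a b where a: "a \<in> S" "X = T #>\<^bsub>AG S\<^esub> a" and b: "b \<in> S" "Y = T #>\<^bsub>AG S\<^esub> b"
    unfolding Q_carrier by blast
  have ab: "a + b \<in> S" using D(1) a b unfolding addsub_def by blast
  have m: "X \<otimes>\<^bsub>AG S Mod T\<^esub> Y = T #>\<^bsub>AG S\<^esub> (a + b)"
    unfolding a(2) b(2) by (rule Q_mult[OF D(2,3,1) a(1) b(1)])
  have pa: "\<phi> a \<in> S'" and pb: "\<phi> b \<in> S'" using a b D(7) by blast+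
  have m2: "(T' #>\<^bsub>AG S'\<^esub> \<phi> a) \<otimes>\<^bsub>AG S' Mod T'\<^esub> (T' #>\<^bsub>AG S'\<^esub> \<phi> b) = T' #>\<^bsub>AG S'\<^esub> (\<phi> a + \<phi> b)"
    by (rule Q_mult[OF D(5,6,4) pa pb])
  have e: "\<phi> (a + b) = \<phi> a + \<phi> b" using a b D(8) by blast
  have 1: "Fq S' T' \<phi> (X \<otimes>\<^bsub>AG S Mod T\<^esub> Y) = T' #>\<^bsub>AG S'\<^esub> (\<phi> a + \<phi> b)"
    by (subst m, subst Fq_app[OF st ab], simp add: e)
  have 2: "Fq S' T' \<phi> X = T' #>\<^bsub>AG S'\<^esub> \<phi> a" using a Fq_app[OF st a(1)] by simp
  have 3: "Fq S' T' \<phi> Y = T' #>\<^bsub>AG S'\<^esub> \<phi> b" using b Fq_app[OF st b(1)] by simp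
  show "Fq S' T' \<phi> (X \<otimes>\<^bsub>AG S Mod T\<^esub> Y) = Fq S' T' \<phi> X \<otimes>\<^bsub>AG S' Mod T'\<^esub> Fq S' T' \<phi> Y"
    unfolding 1 2 3 m2 ..
qed

lemma Fq_inj:
  assumes st: "qsetup S T S' T' \<phi>" and k: "\<And>c. c \<in> S \<Longrightarrow> \<phi> c \<in> T' \<Longrightarrow> c \<in> T"
  shows "inj_on (Fq S' T' \<phi>) (carrier (AG S Mod T))"
proof (rule inj_onI)
  note D = qsetupD[OF st]
  fix X Y assume "X \<in> carrier (AG S Mod T)" "Y \<in> carrier (AG S Mod T)"
    and e: "Fq S' T' \<phi> X = Fq S' T' \<phi> Y"
  then obtain a b where a: "a \<in> S" "X = T #>\<^bsub>AG S\<^esub> a" and b: "b \<in> S" "Y = T #>\<^bsub>AG S\<^esub> b"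
    unfolding Q_carrier by blast
  have "T' #>\<^bsub>AG S'\<^esub> \<phi> a = T' #>\<^bsub>AG S'\<^esub> \<phi> b" using e unfolding a(2) b(2) Fq_app[OF st a(1)] Fq_app[OF st b(1)] .
  then have "\<phi> a - \<phi> b \<in> T'" using AG_rcos_eq[OF D(5)] by blast
  then have "\<phi> (a - b) \<in> T'" using qsetup_diff[OF st a(1) b(1)] by simp
  moreover have "a - b \<in> S" using a b addsub_diff D(1) by blast
  ultimately have "a - b \<in> T" using k by blast
  then show "X = Y" unfolding a(2) b(2) using AG_rcos_eq[OF D(2)] by blast
qed

lemma Fq_image:
  assumes st: "qsetup S T S' T' \<phi>"
  shows "Fq S' T' \<phi> ` carrier (AG S Mod T) = {T' #>\<^bsub>AG S'\<^esub> \<phi> c | c. c \<in> S}"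
proof -
  have "Fq S' T' \<phi> ` {T #>\<^bsub>AG S\<^esub> a |a. a \<in> S} = (\<lambda>a. Fq S' T' \<phi> (T #>\<^bsub>AG S\<^esub> a)) ` S" by blast
  also have "\<dots> = (\<lambda>a. T' #>\<^bsub>AG S'\<^esub> \<phi> a) ` S" using Fq_app[OF st] by (intro image_cong) auto
  finally show ?thesis unfolding Q_carrier by blast
qed

lemma Fq_kernel:
  assumes st: "qsetup S T S' T' \<phi>"
  shows "kernel (AG S Mod T) (AG S' Mod T') (Fq S' T' \<phi>) = {T #>\<^bsub>AG S\<^esub> c | c. c \<in> S \<and> \<phi> c \<in> T'}"
proof -
  note D = qsetupD[OF st]
  have *: "(T' #>\<^bsub>AG S'\<^esub> \<phi> c = T') \<longleftrightarrow> \<phi> c \<in> T'" for c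
    using AG_rcos_eq[OF D(5), of S' "\<phi> c" S' 0] AG_rcos_zero[where T=T' and S=S'] by simp
  show ?thesis unfolding kernel_def Q_carrier Q_one
  proof (intro equalityI subsetI)
    fix X assume "X \<in> {x \<in> {T #>\<^bsub>AG S\<^esub> a |a. a \<in> S}. Fq S' T' \<phi> x = T'}"
    then obtain a where a: "a \<in> S" "X = T #>\<^bsub>AG S\<^esub> a" "Fq S' T' \<phi> X = T'" by blast
    then have "\<phi> a \<in> T'" using Fq_app[OF st a(1)] * by simp
    then show "X \<in> {T #>\<^bsub>AG S\<^esub> c |c. c \<in> S \<and> \<phi> c \<in> T'}" using a by blast
  next
    fix X assume "X \<in> {T #>\<^bsub>AG S\<^esub> c |c. c \<in> S \<and> \<phi> c \<in> T'}"
    then obtain a where a: "a \<in> S" "X = T #>\<^bsub>AG S\<^esub> a" "\<phi> a \<in> T'" by blast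
    then have "Fq S' T' \<phi> X = T'" using Fq_app[OF st a(1)] * by simp
    then show "X \<in> {x \<in> {T #>\<^bsub>AG S\<^esub> a |a. a \<in> S}. Fq S' T' \<phi> x = T'}" using a by blast
  qed
qed



definition supp :: "('a \<Rightarrow> 'g::zero) \<Rightarrow> 'a set" where "supp c = {\<sigma>. c \<sigma> \<noteq> 0}"
definition good :: "('v set \<Rightarrow> 'g::zero) \<Rightarrow> bool" where
  "good c \<longleftrightarrow> finite (supp c) \<and> (\<forall>\<sigma>\<in>supp c. finite \<sigma>)"
definition sa :: "nat \<Rightarrow> 'g::ab_group_add \<Rightarrow> 'g" where "sa k x = (if even k then x else - x)"
definition pos :: "'v::linorder set \<Rightarrow> 'v \<Rightarrow> nat" where "pos \<tau> v = card {u\<in>\<tau>. u < v}"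

lemma sa_add: "sa k (x + y) = sa k x + sa k y" by (simp add: sa_def)
lemma sa_neg: "sa k (- x) = - sa k x" by (simp add: sa_def)
lemma sa_zero[simp]: "sa k 0 = 0" by (simp add: sa_def)
lemma sa_sum: "sa k (sum f A) = (\<Sum>i\<in>A. sa k (f i))"
  by (simp add: sa_def sum_negf)
lemma sa_sa: "sa k (sa j x) = sa (k + j) x" by (simp add: sa_def)
lemma sa_Suc: "sa (Suc k) x = - sa k x" by (simp add: sa_def)

lemma bd_def': "bd c \<tau> = (if \<tau> = {} then 0 else
   (\<Sum>v\<in>{v. v \<notin> \<tau> \<and> c (insert v \<tau>) \<noteq> 0}. sa (pos \<tau> v) (c (insert v \<tau>))))"
  unfolding bd_def sa_def pos_def by simp

lemma finite_Union_supp: "good c \<Longrightarrow> finite (\<Union>(supp c))"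
  unfolding good_def by blast

lemma bd_alt:
  assumes "good c" "\<tau> \<noteq> {}" "finite S" "\<Union>(supp c) \<subseteq> S"
  shows "bd c \<tau> = (\<Sum>v\<in>S - \<tau>. sa (pos \<tau> v) (c (insert v \<tau>)))"
proof -
  have sub: "{v. v \<notin> \<tau> \<and> c (insert v \<tau>) \<noteq> 0} \<subseteq> S - \<tau>"
    using assms(4) unfolding supp_def by blast
  have "(\<Sum>v\<in>{v. v \<notin> \<tau> \<and> c (insert v \<tau>) \<noteq> 0}. sa (pos \<tau> v) (c (insert v \<tau>)))
        = (\<Sum>v\<in>S - \<tau>. sa (pos \<tau> v) (c (insert v \<tau>)))"
    by (rule sum.mono_neutral_left) (use sub assms(3) in auto)
  then show ?thesis using assms(2) by (simp add: bd_def')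
qed

lemma good_add: fixes c d :: "'v set \<Rightarrow> 'g::ab_group_add" shows "good c \<Longrightarrow> good d \<Longrightarrow> good (c + d)"
proof -
  assume a: "good c" "good d"
  have "supp (c + d) \<subseteq> supp c \<union> supp d" unfolding supp_def by auto
  then show ?thesis using a unfolding good_def by (meson Un_iff finite_Un finite_subset subsetD)
qed

lemma good_uminus: fixes c :: "'v set \<Rightarrow> 'g::ab_group_add" shows "good c \<Longrightarrow> good (- c)"
  unfolding good_def supp_def by simp

lemma good_zero: "good 0"
  unfolding good_def supp_def by simp

lemma bd_add:
  assumes c: "good c" and d: "good d"
  shows "bd (c + d) = bd c + bd d"
proof
  fix \<tau>
  show "bd (c + d) \<tau> = (bd c + bd d) \<tau>"
  proof (cases "\<tau> = {}")
    case True then show ?thesis by (simp add: bd_def)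
  next
    case False
    define S where "S = \<Union>(supp c) \<union> \<Union>(supp d)"
    have fS: "finite S" unfolding S_def using finite_Union_supp c d by blast
    have sc: "\<Union>(supp c) \<subseteq> S" "\<Union>(supp d) \<subseteq> S" unfolding S_def by auto
    have "supp (c + d) \<subseteq> supp c \<union> supp d" unfolding supp_def by auto
    then have scd: "\<Union>(supp (c + d)) \<subseteq> S" unfolding S_def by blast
    show ?thesis
      using bd_alt[OF good_add[OF c d] False fS scd] bd_alt[OF c False fS sc(1)] bd_alt[OF d False fS sc(2)]
      by (simp add: sa_add sum.distrib)
  qed
qed

lemma bd_uminus:
  assumes c: "good c"
  shows "bd (- c) = - bd c"
proof
  fix \<tau>
  show "bd (- c) \<tau> = (- bd c) \<tau>"
  proof (cases "\<tau> = {}")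
    case True then show ?thesis by (simp add: bd_def)
  next
    case False
    define S where "S = \<Union>(supp c)"
    have fS: "finite S" unfolding S_def using finite_Union_supp c by blast
    have sc: "\<Union>(supp c) \<subseteq> S" "\<Union>(supp (- c)) \<subseteq> S" unfolding S_def supp_def by auto
    show ?thesis
      using bd_alt[OF good_uminus[OF c] False fS sc(2)] bd_alt[OF c False fS sc(1)]
      by (simp add: sa_neg sum_negf)
  qed
qed

lemma bd_zero: "bd 0 = 0"
  by (rule ext) (simp add: bd_def)

lemma bd_nonzero:
  assumes "bd c \<tau> \<noteq> 0"
  shows "\<tau> \<noteq> {} \<and> (\<exists>v. v \<notin> \<tau> \<and> c (insert v \<tau>) \<noteq> 0)"
proof -
  have "\<tau> \<noteq> {}" using assms by (auto simp: bd_def)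
  moreover have "{v. v \<notin> \<tau> \<and> c (insert v \<tau>) \<noteq> 0} \<noteq> {}"
  proof
    assume E: "{v. v \<notin> \<tau> \<and> c (insert v \<tau>) \<noteq> 0} = {}"
    have "bd c \<tau> = 0" unfolding bd_def' E by simp
    then show False using assms by simp
  qed
  ultimately show ?thesis by blast
qed

lemma good_bd:
  assumes c: "good c"
  shows "good (bd c)" "\<Union>(supp (bd c)) \<subseteq> \<Union>(supp c)"
proof -
  have sub: "supp (bd c) \<subseteq> (\<lambda>(\<sigma>, v). \<sigma> - {v}) ` (SIGMA \<sigma>:supp c. \<sigma>)"
  proof
    fix \<tau> assume "\<tau> \<in> supp (bd c)"
    then have "bd c \<tau> \<noteq> 0" by (simp add: supp_def)
    then obtain v where v: "v \<notin> \<tau>" "c (insert v \<tau>) \<noteq> 0" using bd_nonzero[of c \<tau>] by blast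
    then have "(insert v \<tau>, v) \<in> (SIGMA \<sigma>:supp c. \<sigma>)" unfolding supp_def by auto
    moreover have "\<tau> = (\<lambda>(\<sigma>, v). \<sigma> - {v}) (insert v \<tau>, v)" using v by auto
    ultimately show "\<tau> \<in> (\<lambda>(\<sigma>, v). \<sigma> - {v}) ` (SIGMA \<sigma>:supp c. \<sigma>)" by (rule rev_image_eqI)
  qed
  have "finite (SIGMA \<sigma>:supp c. \<sigma>)" using c unfolding good_def by (intro finite_SigmaI) auto
  then have f: "finite (supp (bd c))" by (rule finite_subset[OF sub finite_imageI])
  have U: "\<Union>(supp (bd c)) \<subseteq> \<Union>(supp c)"
  proof
    fix x assume "x \<in> \<Union>(supp (bd c))"
    then obtain \<tau> where t: "\<tau> \<in> supp (bd c)" "x \<in> \<tau>" by blast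
    then have "bd c \<tau> \<noteq> 0" by (simp add: supp_def)
    then obtain v where v: "v \<notin> \<tau>" "c (insert v \<tau>) \<noteq> 0" using bd_nonzero[of c \<tau>] by blast
    then have "insert v \<tau> \<in> supp c" unfolding supp_def by simp
    then show "x \<in> \<Union>(supp c)" using t(2) by blast
  qed
  have "\<forall>\<tau>\<in>supp (bd c). finite \<tau>"
  proof
    fix \<tau> assume "\<tau> \<in> supp (bd c)"
    then have "bd c \<tau> \<noteq> 0" by (simp add: supp_def)
    then obtain v where v: "v \<notin> \<tau>" "c (insert v \<tau>) \<noteq> 0" using bd_nonzero[of c \<tau>] by blast
    then have "insert v \<tau> \<in> supp c" by (simp add: supp_def)
    moreover have "\<forall>\<sigma>\<in>supp c. finite \<sigma>" using c good_def by auto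
    ultimately have "finite (insert v \<tau>)" by (simp only: Ball_def)
    then show "finite \<tau>" by (rule finite_insert[THEN iffD1])
  qed
  then show "good (bd c)" using f unfolding good_def by simp
  show "\<Union>(supp (bd c)) \<subseteq> \<Union>(supp c)" by (rule U)
qed

lemma pos_insert_less:
  assumes "finite \<rho>" "w \<notin> \<rho>" "w < v"
  shows "pos (insert w \<rho>) v = Suc (pos \<rho> v)"
proof -
  have "{u \<in> insert w \<rho>. u < v} = insert w {u \<in> \<rho>. u < v}" using assms by auto
  then show ?thesis unfolding pos_def using assms by simp
qed

lemma pos_insert_ge:
  assumes "\<not> v < w"
  shows "pos (insert v \<rho>) w = pos \<rho> w"
proof -
  have "{u \<in> insert v \<rho>. u < w} = {u \<in> \<rho>. u < w}" using assms by auto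
  then show ?thesis unfolding pos_def by simp
qed

lemma bd_bd:
  assumes c: "good c"
  shows "bd (bd c) = 0"
proof
  fix \<rho>
  show "bd (bd c) \<rho> = 0 \<rho>"
  proof (cases "\<rho> = {}")
    case True then show ?thesis by (simp add: bd_def)
  next
    case False
    define S where "S = \<Union>(supp c)"
    have fS: "finite S" unfolding S_def using finite_Union_supp c by blast
    define f where "f w v = sa (pos \<rho> w + pos (insert w \<rho>) v) (c (insert v (insert w \<rho>)))" for w v
    have 1: "bd (bd c) \<rho> = (\<Sum>w\<in>S - \<rho>. sa (pos \<rho> w) (bd c (insert w \<rho>)))"
      by (rule bd_alt[OF good_bd(1)[OF c] False fS]) (use good_bd(2)[OF c] in \<open>simp add: S_def\<close>)
    have 2: "bd c (insert w \<rho>) = (\<Sum>v\<in>S - insert w \<rho>. sa (pos (insert w \<rho>) v) (c (insert v (insert w \<rho>))))" for w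
      by (rule bd_alt[OF c _ fS]) (auto simp: S_def)
    define P where "P = (SIGMA w:S - \<rho>. S - insert w \<rho>)"
    have fP: "finite P" unfolding P_def using fS by auto
    have "bd (bd c) \<rho> = (\<Sum>w\<in>S - \<rho>. \<Sum>v\<in>S - insert w \<rho>. f w v)"
      unfolding 1 2 f_def by (simp add: sa_sum sa_sa)
    also have "\<dots> = (\<Sum>(w, v)\<in>P. f w v)"
      unfolding P_def by (rule sum.Sigma) (use fS in auto)
    finally have 3: "bd (bd c) \<rho> = (\<Sum>(w, v)\<in>P. f w v)" .
    define P1 where "P1 = {p \<in> P. fst p < snd p}"
    define P2 where "P2 = {p \<in> P. snd p < fst p}"
    have PU: "P = P1 \<union> P2" unfolding P1_def P2_def P_def by (auto simp: neq_iff)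
    have PD: "P1 \<inter> P2 = {}" unfolding P1_def P2_def by auto
    have P2s: "P2 = prod.swap ` P1" unfolding P1_def P2_def P_def by (auto simp: image_iff)
    have anti: "f v w = - f w v" if "(w, v) \<in> P1" for w v
    proof -
      have wv: "w < v" "w \<notin> \<rho>" "v \<notin> \<rho>" "w \<noteq> v" using that unfolding P1_def P_def by auto
      have ic: "insert w (insert v \<rho>) = insert v (insert w \<rho>)" by (rule insert_commute)
      show ?thesis
      proof (cases "finite \<rho>")
        case True
        have "pos (insert v \<rho>) w = pos \<rho> w" using wv by (intro pos_insert_ge) simp
        moreover have "pos (insert w \<rho>) v = Suc (pos \<rho> v)" using wv True by (intro pos_insert_less)
        ultimately show ?thesis unfolding f_def ic by (simp add: sa_Suc add.commute)
      next
        case False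
        then have "c (insert v (insert w \<rho>)) = 0" using c unfolding good_def supp_def by auto
        then show ?thesis unfolding f_def ic by simp
      qed
    qed
    have "(\<Sum>(w, v)\<in>P2. f w v) = (\<Sum>p\<in>P1. (\<lambda>(w, v). f w v) (prod.swap p))"
      unfolding P2s by (subst sum.reindex) (auto simp: inj_on_def)
    also have "\<dots> = (\<Sum>p\<in>P1. - (\<lambda>(w, v). f w v) p)"
      by (rule sum.cong) (auto simp: anti)
    finally have "(\<Sum>(w, v)\<in>P2. f w v) = - (\<Sum>(w, v)\<in>P1. f w v)" by (simp add: sum_negf)
    moreover have "(\<Sum>(w, v)\<in>P. f w v) = (\<Sum>(w, v)\<in>P1. f w v) + (\<Sum>(w, v)\<in>P2. f w v)"
      unfolding PU by (rule sum.union_disjoint) (use fP PU PD in auto)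
    ultimately show ?thesis using 3 by simp
  qed
qed



lemma chains_good: "c \<in> chains X n \<Longrightarrow> good c"
  unfolding chains_def good_def supp_def by (auto intro: card_ge_0_finite)

lemma chains_addsub: "addsub (chains X n :: ('v set \<Rightarrow> 'g::ab_group_add) set)"
  unfolding addsub_def
proof (intro conjI ballI)
  show "0 \<in> (chains X n :: ('v set \<Rightarrow> 'g) set)" unfolding chains_def by simp
next
  fix x y :: "'v set \<Rightarrow> 'g" assume x: "x \<in> chains X n" and y: "y \<in> chains X n"
  have "{\<sigma>. (x + y) \<sigma> \<noteq> 0} \<subseteq> {\<sigma>. x \<sigma> \<noteq> 0} \<union> {\<sigma>. y \<sigma> \<noteq> 0}" by auto
  moreover have "finite ({\<sigma>. x \<sigma> \<noteq> 0} \<union> {\<sigma>. y \<sigma> \<noteq> 0})" using x y unfolding chains_def by simp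
  ultimately have "finite {\<sigma>. (x + y) \<sigma> \<noteq> 0}" by (rule finite_subset)
  moreover have "\<forall>\<sigma>. (x + y) \<sigma> \<noteq> 0 \<longrightarrow> \<sigma> \<in> X \<and> card \<sigma> = Suc n"
  proof (intro allI impI)
    fix \<sigma> assume "(x + y) \<sigma> \<noteq> 0"
    then have "x \<sigma> \<noteq> 0 \<or> y \<sigma> \<noteq> 0" by auto
    then show "\<sigma> \<in> X \<and> card \<sigma> = Suc n" using x y unfolding chains_def by blast
  qed
  ultimately show "x + y \<in> chains X n" unfolding chains_def by blast
next
  fix x :: "'v set \<Rightarrow> 'g" assume x: "x \<in> chains X n"
  then show "- x \<in> chains X n" unfolding chains_def by simp
qed

lemma chains_mono: "X \<subseteq> Y \<Longrightarrow> chains X n \<subseteq> chains Y n"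
  unfolding chains_def by blast

lemma chains_empty: "chains {} n = {0}"
  unfolding chains_def by (auto simp: fun_eq_iff)

lemma Inf_sub: "Inf X n \<subseteq> chains X n"
  unfolding Inf_def by blast

lemma Inf_good: "c \<in> Inf X n \<Longrightarrow> good c"
  using Inf_sub chains_good by blast

lemma Inf_mono: "X \<subseteq> Y \<Longrightarrow> Inf X n \<subseteq> Inf Y n"
  unfolding Inf_def using chains_mono by blast

lemma Inf_addsub: "addsub (Inf X n :: ('v::linorder set \<Rightarrow> 'g::ab_group_add) set)"
  unfolding addsub_def
proof (intro conjI ballI)
  have "(0 :: 'v set \<Rightarrow> 'g) \<in> chains X k" for k using chains_addsub[of X k] unfolding addsub_def by blast
  then show "0 \<in> (Inf X n :: ('v set \<Rightarrow> 'g) set)" unfolding Inf_def by (simp add: bd_zero)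
next
  fix x y :: "'v set \<Rightarrow> 'g" assume x: "x \<in> Inf X n" and y: "y \<in> Inf X n"
  note C = chains_addsub[of X n, unfolded addsub_def] chains_addsub[of X "n - 1", unfolded addsub_def]
  have g: "good x" "good y" using x y Inf_good by blast+
  have e: "bd (x + y) = bd x + bd y" by (rule bd_add[OF g])
  have "x + y \<in> chains X n" using x y C by (auto simp: Inf_def)
  moreover have "n = 0 \<or> bd (x + y) \<in> chains X (n - 1)" using x y C unfolding e by (auto simp: Inf_def)
  ultimately show "x + y \<in> Inf X n" by (simp add: Inf_def)
next
  fix x :: "'v set \<Rightarrow> 'g" assume x: "x \<in> Inf X n"
  note C = chains_addsub[of X n, unfolded addsub_def] chains_addsub[of X "n - 1", unfolded addsub_def]
  have g: "good x" using x Inf_good by blast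
  have e: "bd (- x) = - bd x" by (rule bd_uminus[OF g])
  have "- x \<in> chains X n" using x C by (auto simp: Inf_def)
  moreover have "n = 0 \<or> bd (- x) \<in> chains X (n - 1)" using x C unfolding e by (auto simp: Inf_def)
  ultimately show "- x \<in> Inf X n" by (simp add: Inf_def)
qed

lemma Inf_bd:
  fixes d :: "'v::linorder set \<Rightarrow> 'g::ab_group_add"
  shows "d \<in> Inf X (Suc n) \<Longrightarrow> bd d \<in> Inf X n"
proof -
  assume d: "d \<in> Inf X (Suc n)"
  then have "bd d \<in> chains X n" unfolding Inf_def by simp
  moreover have "bd (bd d) = 0" by (rule bd_bd[OF Inf_good[OF d]])
  moreover have "(0 :: 'v set \<Rightarrow> 'g) \<in> chains X (n - 1)" using chains_addsub[of X "n - 1"] unfolding addsub_def by blast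
  ultimately show ?thesis unfolding Inf_def by simp
qed

lemma Inf_empty: "Inf {} n = {0}"
proof -
  have "0 \<in> Inf {} n" using Inf_addsub[of "{}" n] unfolding addsub_def by blast
  moreover have "Inf {} n \<subseteq> {0}" using Inf_sub[of "{}" n] by (simp add: chains_empty)
  ultimately show ?thesis by auto
qed

lemma Inf_zero[simp]: "(0 :: 'v::linorder set \<Rightarrow> 'g::ab_group_add) \<in> Inf X n"
  using Inf_addsub[of X n] unfolding addsub_def by blast

lemma Inf_plus: "(x :: 'v::linorder set \<Rightarrow> 'g::ab_group_add) \<in> Inf X n \<Longrightarrow> y \<in> Inf X n \<Longrightarrow> x + y \<in> Inf X n"
  using Inf_addsub[of X n] unfolding addsub_def by blast

lemma Inf_uminus: "(x :: 'v::linorder set \<Rightarrow> 'g::ab_group_add) \<in> Inf X n \<Longrightarrow> - x \<in> Inf X n"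
  using Inf_addsub[of X n] unfolding addsub_def by blast

lemma Inf_diff: "(x :: 'v::linorder set \<Rightarrow> 'g::ab_group_add) \<in> Inf X n \<Longrightarrow> y \<in> Inf X n \<Longrightarrow> x - y \<in> Inf X n"
  using Inf_addsub[of X n] addsub_diff by blast

lemma bd_bd_Inf: "c \<in> Inf X n \<Longrightarrow> bd (bd c) = 0"
  by (rule bd_bd[OF Inf_good])

lemma bd_add_Inf: "c \<in> Inf X n \<Longrightarrow> d \<in> Inf Y k \<Longrightarrow> bd (c + d) = bd c + bd d"
  by (rule bd_add[OF Inf_good Inf_good])

lemma bd_diff_Inf: "c \<in> Inf X n \<Longrightarrow> d \<in> Inf Y k \<Longrightarrow> bd (c - d) = bd c - bd d"
proof -
  assume c: "c \<in> Inf X n" and d: "d \<in> Inf Y k"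
  have "bd (c - d) = bd (c + - d)" by simp
  also have "\<dots> = bd c + bd (- d)" by (rule bd_add[OF Inf_good[OF c] good_uminus[OF Inf_good[OF d]]])
  also have "\<dots> = bd c + - bd d" by (simp only: bd_uminus[OF Inf_good[OF d]])
  also have "\<dots> = bd c - bd d" by simp
  finally show ?thesis .
qed

lemma rel_cycles_empty: "rel_cycles B {} n = {c \<in> Inf B n. n = 0 \<or> bd c = 0}"
  unfolding rel_cycles_def Inf_empty by simp

lemma rel_bounds_eq: "rel_bounds B A n = {bd d + a | d a. d \<in> Inf B (Suc n) \<and> a \<in> Inf A n}"
  unfolding rel_bounds_def by (simp add: plus_fun_def)

lemma rel_bounds_empty: "rel_bounds B {} n = bd ` Inf B (Suc n)"
  unfolding rel_bounds_eq Inf_empty by auto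

lemma rel_cycles_addsub: "addsub (rel_cycles B A n :: ('v::linorder set \<Rightarrow> 'g::ab_group_add) set)"
  unfolding addsub_def
proof (intro conjI ballI)
  show "0 \<in> (rel_cycles B A n :: ('v set \<Rightarrow> 'g) set)" unfolding rel_cycles_def by (simp add: bd_zero)
next
  fix x y :: "'v set \<Rightarrow> 'g" assume x: "x \<in> rel_cycles B A n" and y: "y \<in> rel_cycles B A n"
  have "bd (x + y) = bd x + bd y" using x y bd_add_Inf unfolding rel_cycles_def by blast
  then show "x + y \<in> rel_cycles B A n" using x y unfolding rel_cycles_def by (auto intro: Inf_plus)
next
  fix x :: "'v set \<Rightarrow> 'g" assume x: "x \<in> rel_cycles B A n"
  have "bd (- x) = - bd x" using x bd_uminus Inf_good unfolding rel_cycles_def by blast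
  then show "- x \<in> rel_cycles B A n" using x unfolding rel_cycles_def by (auto intro: Inf_uminus)
qed

lemma rel_bounds_addsub: "addsub (rel_bounds B A n :: ('v::linorder set \<Rightarrow> 'g::ab_group_add) set)"
  unfolding addsub_def rel_bounds_eq
proof (intro conjI ballI)
  have "(0 :: 'v set \<Rightarrow> 'g) = bd 0 + 0" by (simp add: bd_zero)
  then show "(0 :: 'v set \<Rightarrow> 'g) \<in> {bd d + a |d a. d \<in> Inf B (Suc n) \<and> a \<in> Inf A n}" using Inf_zero by blast
next
  fix x y :: "'v set \<Rightarrow> 'g"
  assume "x \<in> {bd d + a |d a. d \<in> Inf B (Suc n) \<and> a \<in> Inf A n}" "y \<in> {bd d + a |d a. d \<in> Inf B (Suc n) \<and> a \<in> Inf A n}"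
  then obtain d a d' a' where x: "x = bd d + a" "d \<in> Inf B (Suc n)" "a \<in> Inf A n"
    and y: "y = bd d' + a'" "d' \<in> Inf B (Suc n)" "a' \<in> Inf A n" by blast
  have "x + y = bd (d + d') + (a + a')" using x y bd_add_Inf[of d B "Suc n" d' B "Suc n"] by (simp add: algebra_simps)
  moreover have "d + d' \<in> Inf B (Suc n)" "a + a' \<in> Inf A n" using x y Inf_plus by blast+
  ultimately show "x + y \<in> {bd d + a |d a. d \<in> Inf B (Suc n) \<and> a \<in> Inf A n}" by blast
next
  fix x :: "'v set \<Rightarrow> 'g"
  assume "x \<in> {bd d + a |d a. d \<in> Inf B (Suc n) \<and> a \<in> Inf A n}"
  then obtain d a where x: "x = bd d + a" "d \<in> Inf B (Suc n)" "a \<in> Inf A n" by blast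
  have "- x = bd (- d) + (- a)" using x bd_uminus[OF Inf_good[OF x(2)]] by (simp add: algebra_simps)
  moreover have "- d \<in> Inf B (Suc n)" "- a \<in> Inf A n" using x Inf_uminus by blast+
  ultimately show "- x \<in> {bd d + a |d a. d \<in> Inf B (Suc n) \<and> a \<in> Inf A n}" by blast
qed

lemma rel_bounds_sub:
  assumes "A \<subseteq> B"
  shows "rel_bounds B A n \<subseteq> (rel_cycles B A n :: ('v::linorder set \<Rightarrow> 'g::ab_group_add) set)"
proof
  fix x :: "'v set \<Rightarrow> 'g" assume "x \<in> rel_bounds B A n"
  then obtain d a where x: "x = bd d + a" "d \<in> Inf B (Suc n)" "a \<in> Inf A n" unfolding rel_bounds_eq by blast
  have "bd d \<in> Inf B n" using x Inf_bd by blast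
  moreover have "a \<in> Inf B n" using x Inf_mono assms by blast
  ultimately have xI: "x \<in> Inf B n" using x Inf_plus by blast
  have "bd x = bd (bd d) + bd a" using x bd_add_Inf Inf_bd by blast
  then have bx: "bd x = bd a" using bd_bd_Inf x by simp
  have "n = 0 \<or> bd a \<in> Inf A (n - 1)"
    using x(3) Inf_bd[of a A "n - 1"] by (cases n) auto
  then show "x \<in> rel_cycles B A n" unfolding rel_cycles_def using xI bx by auto
qed

lemma cycle_group_eq: "cycle_group B A n = AG (rel_cycles B A n)"
  unfolding cycle_group_def AG_def by (simp add: plus_fun_def zero_fun_def fun_eq_iff)

lemma homology_eq: "rel_emb_homology B A n = AG (rel_cycles B A n) Mod rel_bounds B A n"
  unfolding rel_emb_homology_def cycle_group_eq ..

lemma vanish: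
  assumes "carrier (emb_homology X n :: ('v::linorder set \<Rightarrow> 'g::ab_group_add) set monoid)
             = {\<one>\<^bsub>emb_homology X n :: ('v set \<Rightarrow> 'g) set monoid\<^esub>}"
    and "c \<in> Inf X n" "n = 0 \<or> bd c = (0 :: 'v set \<Rightarrow> 'g)"
  shows "\<exists>d \<in> Inf X (Suc n). c = bd d"
proof -
  define T :: "('v set \<Rightarrow> 'g) set" where "T = rel_bounds X {} n"
  have cz: "c \<in> rel_cycles X {} n" using assms(2,3) unfolding rel_cycles_empty by blast
  have "T #>\<^bsub>AG (rel_cycles X {} n)\<^esub> c \<in> carrier (emb_homology X n :: ('v set \<Rightarrow> 'g) set monoid)"
    unfolding emb_homology_def homology_eq Q_carrier T_def using cz by blast
  then have "T #>\<^bsub>AG (rel_cycles X {} n)\<^esub> c = T"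
    using assms(1) unfolding emb_homology_def homology_eq Q_one T_def by blast
  moreover have "c \<in> T #>\<^bsub>AG (rel_cycles X {} n)\<^esub> c"
    using rel_bounds_addsub[of X "{}" n] unfolding AG_rcos addsub_def T_def by force
  ultimately have "c \<in> T" by simp
  then show ?thesis unfolding T_def rel_bounds_empty by blast
qed



lemma SES_transport:
  assumes S: "short_exact_sequence A B C f g" and be: "\<beta> \<in> iso A A'" and ga: "\<gamma> \<in> iso C' C"
    and gA': "group A'" and gC': "group C'"
  shows "short_exact_sequence A' B C' (\<beta> \<circ> f) (g \<circ> \<gamma>)"
proof -
  have ex: "exact_seq ([A,B,C],[f,g])" and fe: "f \<in> epi B A" and gm: "g \<in> mon C B"
    using short_exact_sequenceD[OF S] by auto
  have ghC: "group_hom C B g" and gA: "group A" and fh: "f \<in> hom B A"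
    and ker: "kernel B A f = g ` carrier C"
    using ex by auto
  have gB: "group B" using ghC unfolding group_hom_def by blast
  have gC: "group C" using ghC unfolding group_hom_def by blast
  have bh: "\<beta> \<in> hom A A'" "\<gamma> \<in> hom C' C" using be ga iso_imp_homomorphism by blast+
  have gh: "g \<in> hom C B" using gm unfolding mon_def by blast
  have h1: "g \<circ> \<gamma> \<in> hom C' B" by (rule hom_compose[OF bh(2) gh])
  have h2: "\<beta> \<circ> f \<in> hom B A'" by (rule hom_compose[OF fh bh(1)])
  have ghC': "group_hom C' B (g \<circ> \<gamma>)"
    unfolding group_hom_def group_hom_axioms_def using gC' gB h1 by blast
  have b1: "\<beta> \<one>\<^bsub>A\<^esub> = \<one>\<^bsub>A'\<^esub>" by (rule hom_one[OF bh(1) gA gA'])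
  have binj: "inj_on \<beta> (carrier A)" using be unfolding iso_iff by blast
  have "kernel B A' (\<beta> \<circ> f) = kernel B A f"
  proof -
    have "\<beta> (f x) = \<one>\<^bsub>A'\<^esub> \<longleftrightarrow> f x = \<one>\<^bsub>A\<^esub>" if "x \<in> carrier B" for x
    proof -
      have "f x \<in> carrier A" by (rule hom_in_carrier[OF fh that])
      moreover have "\<one>\<^bsub>A\<^esub> \<in> carrier A" using gA group.is_monoid monoid.one_closed by blast
      ultimately show ?thesis using b1 binj unfolding inj_on_def by metis
    qed
    then show ?thesis unfolding kernel_def by auto
  qed
  moreover have "(g \<circ> \<gamma>) ` carrier C' = g ` carrier C"
  proof -
    have "\<gamma> ` carrier C' = carrier C" using ga unfolding iso_iff by blast
    then show ?thesis by (metis image_comp)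
  qed
  ultimately have ker': "kernel B A' (\<beta> \<circ> f) = (g \<circ> \<gamma>) ` carrier C'" using ker by simp
  have ex': "exact_seq ([A',B,C'],[\<beta> \<circ> f, g \<circ> \<gamma>])"
    using ghC' gA' h2 ker' by simp
  have "\<beta> \<circ> f \<in> epi B A'" using epi_compose[OF fe] be iso_iff_mon_epi by blast
  moreover have "g \<circ> \<gamma> \<in> mon C' B" using mon_compose[OF _ gm] ga iso_iff_mon_epi by blast
  ultimately show ?thesis using ex' short_exact_sequence_iff by blast
qed

lemma Fq_surj:
  assumes st: "qsetup S T S' T' \<phi>" and sj: "\<And>z. z \<in> S' \<Longrightarrow> \<exists>c\<in>S. \<phi> c - z \<in> T'"
  shows "Fq S' T' \<phi> ` carrier (AG S Mod T) = carrier (AG S' Mod T')"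
proof -
  note D = qsetupD[OF st]
  have "{T' #>\<^bsub>AG S'\<^esub> \<phi> c | c. c \<in> S} = {T' #>\<^bsub>AG S'\<^esub> a | a. a \<in> S'}"
  proof (intro equalityI subsetI)
    fix X assume "X \<in> {T' #>\<^bsub>AG S'\<^esub> \<phi> c | c. c \<in> S}"
    then obtain c where "c \<in> S" "X = T' #>\<^bsub>AG S'\<^esub> \<phi> c" by blast
    moreover have "\<phi> c \<in> S'" using D(7) \<open>c \<in> S\<close> by blast
    ultimately show "X \<in> {T' #>\<^bsub>AG S'\<^esub> a | a. a \<in> S'}" by blast
  next
    fix X assume "X \<in> {T' #>\<^bsub>AG S'\<^esub> a | a. a \<in> S'}"
    then obtain z where z: "z \<in> S'" "X = T' #>\<^bsub>AG S'\<^esub> z" by blast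
    then obtain c where c: "c \<in> S" "\<phi> c - z \<in> T'" using sj by blast
    have "T' #>\<^bsub>AG S'\<^esub> \<phi> c = T' #>\<^bsub>AG S'\<^esub> z" using AG_rcos_eq[OF D(5)] c(2) by blast
    then show "X \<in> {T' #>\<^bsub>AG S'\<^esub> \<phi> c | c. c \<in> S}" using z c(1) by auto
  qed
  then have "Fq S' T' \<phi> ` carrier (AG S Mod T) = {T' #>\<^bsub>AG S'\<^esub> a | a. a \<in> S'}"
    using Fq_image[OF st] by simp
  then show ?thesis by (simp only: Q_carrier)
qed

lemma rel_cycles_Suc: "c \<in> rel_cycles B A (Suc p) \<longleftrightarrow> c \<in> Inf B (Suc p) \<and> bd c \<in> Inf A p"
  by (simp add: rel_cycles_def)

lemma rel_cycles_monoA: "A \<subseteq> A' \<Longrightarrow> rel_cycles B A n \<subseteq> (rel_cycles B A' n :: ('v::linorder set \<Rightarrow> 'g::ab_group_add) set)"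
  unfolding rel_cycles_def using Inf_mono by blast

lemma rel_bounds_monoA: "A \<subseteq> A' \<Longrightarrow> rel_bounds B A n \<subseteq> (rel_bounds B A' n :: ('v::linorder set \<Rightarrow> 'g::ab_group_add) set)"
  unfolding rel_bounds_eq using Inf_mono by blast

lemma bounds_of_bd: "(d :: 'v::linorder set \<Rightarrow> 'g::ab_group_add) \<in> Inf B (Suc n) \<Longrightarrow> bd d \<in> rel_bounds B A n"
  unfolding rel_bounds_eq by (rule CollectI, rule exI[of _ d], rule exI[of _ 0]) simp

lemma bounds_of_inf: "(a :: 'v::linorder set \<Rightarrow> 'g::ab_group_add) \<in> Inf A n \<Longrightarrow> a \<in> rel_bounds B A n"
  unfolding rel_bounds_eq by (rule CollectI, rule exI[of _ 0], rule exI[of _ a]) (simp add: bd_zero)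

lemma qsetup_id:
  assumes "A \<subseteq> A'" "A' \<subseteq> B"
  shows "qsetup (rel_cycles B A n) (rel_bounds B A n) (rel_cycles B A' n) (rel_bounds B A' n)
     (id :: ('v::linorder set \<Rightarrow> 'g::ab_group_add) \<Rightarrow> _)"
  unfolding qsetup_def
proof (intro conjI ballI)
  show "addsub (rel_cycles B A n :: ('v set \<Rightarrow> 'g) set)" "addsub (rel_bounds B A n :: ('v set \<Rightarrow> 'g) set)"
    "addsub (rel_cycles B A' n :: ('v set \<Rightarrow> 'g) set)" "addsub (rel_bounds B A' n :: ('v set \<Rightarrow> 'g) set)"
    using rel_cycles_addsub rel_bounds_addsub by blast+
  have AB: "A \<subseteq> B" using assms by blast
  show "rel_bounds B A n \<subseteq> (rel_cycles B A n :: ('v set \<Rightarrow> 'g) set)" by (rule rel_bounds_sub[OF AB])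
  show "rel_bounds B A' n \<subseteq> (rel_cycles B A' n :: ('v set \<Rightarrow> 'g) set)" by (rule rel_bounds_sub[OF assms(2)])
next
  fix x :: "'v set \<Rightarrow> 'g" assume "x \<in> rel_cycles B A n"
  then show "id x \<in> rel_cycles B A' n" using rel_cycles_monoA[OF assms(1)] by auto
next
  fix x y :: "'v set \<Rightarrow> 'g"
  show "id (x + y) = id x + id y" by simp
next
  fix x :: "'v set \<Rightarrow> 'g" assume "x \<in> rel_bounds B A n"
  then show "id x \<in> rel_bounds B A' n" using rel_bounds_monoA[OF assms(1)] by auto
qed

lemma qsetup_bd:
  assumes AB: "A \<subseteq> B"
  shows "qsetup (rel_cycles B A (Suc p)) (rel_bounds B A (Suc p)) (rel_cycles A {} p) (rel_bounds A {} p)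
     (bd :: ('v::linorder set \<Rightarrow> 'g::ab_group_add) \<Rightarrow> _)"
  unfolding qsetup_def
proof (intro conjI ballI)
  show "addsub (rel_cycles B A (Suc p) :: ('v set \<Rightarrow> 'g) set)" "addsub (rel_bounds B A (Suc p) :: ('v set \<Rightarrow> 'g) set)"
    "addsub (rel_cycles A {} p :: ('v set \<Rightarrow> 'g) set)" "addsub (rel_bounds A {} p :: ('v set \<Rightarrow> 'g) set)"
    using rel_cycles_addsub rel_bounds_addsub by blast+
  show "rel_bounds B A (Suc p) \<subseteq> (rel_cycles B A (Suc p) :: ('v set \<Rightarrow> 'g) set)" by (rule rel_bounds_sub[OF AB])
  show "rel_bounds A {} p \<subseteq> (rel_cycles A {} p :: ('v set \<Rightarrow> 'g) set)" by (rule rel_bounds_sub) simp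
next
  fix x :: "'v set \<Rightarrow> 'g" assume x: "x \<in> rel_cycles B A (Suc p)"
  then have "bd x \<in> Inf A p" "x \<in> Inf B (Suc p)" unfolding rel_cycles_Suc by blast+
  moreover have "bd (bd x) = 0" using bd_bd_Inf \<open>x \<in> Inf B (Suc p)\<close> by blast
  ultimately show "bd x \<in> rel_cycles A {} p" unfolding rel_cycles_empty by simp
next
  fix x y :: "'v set \<Rightarrow> 'g" assume "x \<in> rel_cycles B A (Suc p)" "y \<in> rel_cycles B A (Suc p)"
  then show "bd (x + y) = bd x + bd y" unfolding rel_cycles_Suc using bd_add_Inf by blast
next
  fix t :: "'v set \<Rightarrow> 'g" assume "t \<in> rel_bounds B A (Suc p)"
  then obtain d a where t: "t = bd d + a" "d \<in> Inf B (Suc (Suc p))" "a \<in> Inf A (Suc p)"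
    unfolding rel_bounds_eq by blast
  have "bd t = bd (bd d) + bd a" using t bd_add_Inf Inf_bd by blast
  then have "bd t = bd a" using bd_bd_Inf t(2) by simp
  then show "bd t \<in> rel_bounds A {} p" using bounds_of_bd[OF t(3)] by simp
qed



theorem mainTheorem6:
  fixes H :: "'v::linorder set set" and l m :: nat
  assumes "is_hypergraph H" and "l + 1 \<le> m"
    and "\<forall>n. l \<le> n \<and> n \<le> m \<longrightarrow>
           carrier (emb_homology H n :: ('v set \<Rightarrow> 'g::ab_group_add) set monoid)
             = {\<one>\<^bsub>emb_homology H n :: ('v set \<Rightarrow> 'g) set monoid\<^esub>}"
  shows "\<forall>n. l + 1 \<le> n \<and> n \<le> m \<longrightarrow>
     (rel_emb_homology (assoc_complex H) H n :: ('v set \<Rightarrow> 'g) set monoid)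
        \<cong> (emb_homology (assoc_complex H) n :: ('v set \<Rightarrow> 'g) set monoid)
   \<and> (rel_emb_homology H (lower_complex H) n :: ('v set \<Rightarrow> 'g) set monoid)
        \<cong> (emb_homology (lower_complex H) (n - 1) :: ('v set \<Rightarrow> 'g) set monoid)
   \<and> (\<exists>f g. short_exact_sequence
        (emb_homology (lower_complex H) (n - 1) :: ('v set \<Rightarrow> 'g) set monoid)
        (rel_emb_homology (assoc_complex H) (lower_complex H) n)
        (emb_homology (assoc_complex H) n) f g)
   \<and> (\<exists>f g. short_exact_sequence
        (rel_emb_homology H (lower_complex H) n :: ('v set \<Rightarrow> 'g) set monoid)
        (rel_emb_homology (assoc_complex H) (lower_complex H) n)
        (rel_emb_homology (assoc_complex H) H n) f g)"
proof (intro allI impI)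
  fix n assume nr: "l + 1 \<le> n \<and> n \<le> m"
  obtain p where np: "n = Suc p" and lp: "l \<le> p" using nr by (cases n) auto
  define K where "K = assoc_complex H"
  define L where "L = lower_complex H"
  have LH: "L \<subseteq> H" unfolding L_def lower_complex_def by blast
  have HK: "H \<subseteq> K" using assms(1) unfolding K_def assoc_complex_def is_hypergraph_def by blast
  have LK: "L \<subseteq> K" using LH HK by blast
  have Vn: "\<exists>d\<in>Inf H (Suc n). c = bd d" if "c \<in> Inf H n" "bd c = 0" for c :: "'v set \<Rightarrow> 'g"
    using vanish[of H n c] assms(3) nr that by simp
  have Vp: "\<exists>d\<in>Inf H n. c = bd d" if "c \<in> Inf H p" "p = 0 \<or> bd c = 0" for c :: "'v set \<Rightarrow> 'g"
    using vanish[of H p c] assms(3) nr that np lp by simp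

  define ZK0 :: "('v set \<Rightarrow> 'g) set" where "ZK0 = rel_cycles K {} n"
  define BK0 :: "('v set \<Rightarrow> 'g) set" where "BK0 = rel_bounds K {} n"
  define ZKH :: "('v set \<Rightarrow> 'g) set" where "ZKH = rel_cycles K H n"
  define BKH :: "('v set \<Rightarrow> 'g) set" where "BKH = rel_bounds K H n"
  define ZKL :: "('v set \<Rightarrow> 'g) set" where "ZKL = rel_cycles K L n"
  define BKL :: "('v set \<Rightarrow> 'g) set" where "BKL = rel_bounds K L n"
  define ZHL :: "('v set \<Rightarrow> 'g) set" where "ZHL = rel_cycles H L n"
  define BHL :: "('v set \<Rightarrow> 'g) set" where "BHL = rel_bounds H L n"
  define ZL0 :: "('v set \<Rightarrow> 'g) set" where "ZL0 = rel_cycles L {} p"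
  define BL0 :: "('v set \<Rightarrow> 'g) set" where "BL0 = rel_bounds L {} p"

  have Q1: "qsetup ZK0 BK0 ZKH BKH id" unfolding ZK0_def BK0_def ZKH_def BKH_def
    by (rule qsetup_id) (use HK in auto)
  have Q3: "qsetup ZK0 BK0 ZKL BKL id" unfolding ZK0_def BK0_def ZKL_def BKL_def
    by (rule qsetup_id) (use LK in auto)
  have Q2: "qsetup ZHL BHL ZL0 BL0 bd" unfolding ZHL_def BHL_def ZL0_def BL0_def np
    by (rule qsetup_bd[OF LH])
  have Q4: "qsetup ZKL BKL ZL0 BL0 bd" unfolding ZKL_def BKL_def ZL0_def BL0_def np
    by (rule qsetup_bd[OF LK])

  have ZK0_iff: "c \<in> ZK0 \<longleftrightarrow> c \<in> Inf K n \<and> bd c = 0" for c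
    unfolding ZK0_def rel_cycles_empty np by simp
  have ZL0_iff: "c \<in> ZL0 \<longleftrightarrow> c \<in> Inf L p \<and> (p = 0 \<or> bd c = 0)" for c
    unfolding ZL0_def rel_cycles_empty by simp
  have BK0_iff: "c \<in> BK0 \<longleftrightarrow> (\<exists>d\<in>Inf K (Suc n). c = bd d)" for c
    unfolding BK0_def rel_bounds_empty by blast
  have BL0_iff: "c \<in> BL0 \<longleftrightarrow> (\<exists>d\<in>Inf L n. c = bd d)" for c
    unfolding BL0_def rel_bounds_empty np by blast
  have ZKH_iff: "c \<in> ZKH \<longleftrightarrow> c \<in> Inf K n \<and> bd c \<in> Inf H p" for c
    unfolding ZKH_def np rel_cycles_Suc ..
  have ZKL_iff: "c \<in> ZKL \<longleftrightarrow> c \<in> Inf K n \<and> bd c \<in> Inf L p" for c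
    unfolding ZKL_def np rel_cycles_Suc ..
  have ZHL_iff: "c \<in> ZHL \<longleftrightarrow> c \<in> Inf H n \<and> bd c \<in> Inf L p" for c
    unfolding ZHL_def np rel_cycles_Suc ..
  have IHK: "Inf H k \<subseteq> (Inf K k :: ('v set \<Rightarrow> 'g) set)" for k using Inf_mono[OF HK] by blast
  have ILH: "Inf L k \<subseteq> (Inf H k :: ('v set \<Rightarrow> 'g) set)" for k using Inf_mono[OF LH] by blast
  have ILK: "Inf L k \<subseteq> (Inf K k :: ('v set \<Rightarrow> 'g) set)" for k using Inf_mono[OF LK] by blast

  have BL00: "0 \<in> BL0" using qsetupD(5)[OF Q2] unfolding addsub_def by blast

  have kerid: "c \<in> BK0" if A'H: "A' \<subseteq> H" and c0: "c \<in> ZK0" and cb: "c \<in> rel_bounds K A' n"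
    for A' and c :: "'v set \<Rightarrow> 'g"
  proof -
    obtain e a where ea: "c = bd e + a" "e \<in> Inf K (Suc n)" "a \<in> Inf A' n"
      using cb unfolding rel_bounds_eq by blast
    have "bd c = bd (bd e) + bd a" using ea bd_add_Inf Inf_bd by blast
    then have "bd a = 0" using c0 ZK0_iff bd_bd_Inf[OF ea(2)] by simp
    moreover have aH: "a \<in> Inf H n" using Inf_mono[OF A'H] ea(3) by blast
    ultimately obtain e' where e': "e' \<in> Inf H (Suc n)" "a = bd e'" using Vn by blast
    have e'K: "e' \<in> Inf K (Suc n)" using e' IHK by blast
    have "c = bd (e + e')" using ea e' bd_add_Inf[OF ea(2) e'K] by simp
    moreover have "e + e' \<in> Inf K (Suc n)" using ea(2) e'K Inf_plus by blast
    ultimately show ?thesis using BK0_iff by blast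
  qed

  define \<phi>1 where "\<phi>1 = Fq ZKH BKH id"
  have iso1: "\<phi>1 \<in> iso (AG ZK0 Mod BK0) (AG ZKH Mod BKH)"
    unfolding iso_iff \<phi>1_def
  proof (intro conjI)
    show "Fq ZKH BKH id \<in> hom (AG ZK0 Mod BK0) (AG ZKH Mod BKH)" by (rule Fq_hom[OF Q1])
    show "inj_on (Fq ZKH BKH id) (carrier (AG ZK0 Mod BK0))"
      by (rule Fq_inj[OF Q1]) (use kerid[of H] BKH_def in auto)
    show "Fq ZKH BKH id ` carrier (AG ZK0 Mod BK0) = carrier (AG ZKH Mod BKH)"
    proof (rule Fq_surj[OF Q1])
      fix z assume z: "z \<in> ZKH"
      then have bz: "bd z \<in> Inf H p" "z \<in> Inf K n" using ZKH_iff by blast+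
      have "bd (bd z) = 0" using bd_bd_Inf bz(2) by blast
      then obtain d where d: "d \<in> Inf H n" "bd z = bd d" using Vp bz by blast
      have dK: "d \<in> Inf K n" using d IHK by blast
      have "z - d \<in> ZK0" unfolding ZK0_iff using bz(2) dK Inf_diff bd_diff_Inf[OF bz(2) dK] d(2) by simp
      moreover have "id (z - d) - z \<in> BKH"
      proof -
        have "- d \<in> Inf H n" using d Inf_uminus by blast
        then have "- d \<in> BKH" unfolding BKH_def by (rule bounds_of_inf)
        then show ?thesis by simp
      qed
      ultimately show "\<exists>c\<in>ZK0. id c - z \<in> BKH" by blast
    qed
  qed

  define \<phi>2 where "\<phi>2 = Fq ZL0 BL0 bd"
  have iso2: "\<phi>2 \<in> iso (AG ZHL Mod BHL) (AG ZL0 Mod BL0)"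
    unfolding iso_iff \<phi>2_def
  proof (intro conjI)
    show "Fq ZL0 BL0 bd \<in> hom (AG ZHL Mod BHL) (AG ZL0 Mod BL0)" by (rule Fq_hom[OF Q2])
    show "inj_on (Fq ZL0 BL0 bd) (carrier (AG ZHL Mod BHL))"
    proof (rule Fq_inj[OF Q2])
      fix c assume c: "c \<in> ZHL" "bd c \<in> BL0"
      then obtain e where e: "e \<in> Inf L n" "bd c = bd e" using BL0_iff by blast
      have cH: "c \<in> Inf H n" using c ZHL_iff by blast
      have eH: "e \<in> Inf H n" using e ILH by blast
      have "c - e \<in> Inf H n" using cH eH Inf_diff by blast
      moreover have "bd (c - e) = 0" using bd_diff_Inf[OF cH eH] e by simp
      ultimately obtain f where f: "f \<in> Inf H (Suc n)" "c - e = bd f" using Vn by blast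
      have "c = bd f + e" using f by (simp add: algebra_simps)
      then show "c \<in> BHL" unfolding BHL_def rel_bounds_eq using f e by blast
    qed
    show "Fq ZL0 BL0 bd ` carrier (AG ZHL Mod BHL) = carrier (AG ZL0 Mod BL0)"
    proof (rule Fq_surj[OF Q2])
      fix z assume z: "z \<in> ZL0"
      then have zL: "z \<in> Inf L p" "p = 0 \<or> bd z = 0" using ZL0_iff by blast+
      then have "z \<in> Inf H p" using ILH by blast
      then obtain d where d: "d \<in> Inf H n" "z = bd d" using Vp zL by blast
      have "d \<in> ZHL" using d zL ZHL_iff by blast
      moreover have "bd d - z \<in> BL0" using d BL00 by simp
      ultimately show "\<exists>c\<in>ZHL. bd c - z \<in> BL0" by blast
    qed
  qed

  define f3 where "f3 = Fq ZL0 BL0 bd"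
  define g3 where "g3 = Fq ZKL BKL id"
  have grp: "group (AG ZK0 Mod BK0)" "group (AG ZKH Mod BKH)" "group (AG ZKL Mod BKL)"
    "group (AG ZHL Mod BHL)" "group (AG ZL0 Mod BL0)"
    using Q_group qsetupD[OF Q1] qsetupD[OF Q2] qsetupD[OF Q3] by blast+
  have g3h: "g3 \<in> hom (AG ZK0 Mod BK0) (AG ZKL Mod BKL)" unfolding g3_def by (rule Fq_hom[OF Q3])
  have f3h: "f3 \<in> hom (AG ZKL Mod BKL) (AG ZL0 Mod BL0)" unfolding f3_def by (rule Fq_hom[OF Q4])
  have g3m: "g3 \<in> mon (AG ZK0 Mod BK0) (AG ZKL Mod BKL)"
    unfolding mon_def using g3h
  proof (intro CollectI conjI)
    show "inj_on g3 (carrier (AG ZK0 Mod BK0))" unfolding g3_def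
      by (rule Fq_inj[OF Q3]) (use kerid[OF LH] BKL_def in auto)
  qed
  have f3e: "f3 \<in> epi (AG ZKL Mod BKL) (AG ZL0 Mod BL0)"
    unfolding epi_def using f3h
  proof (intro CollectI conjI)
    show "f3 ` carrier (AG ZKL Mod BKL) = carrier (AG ZL0 Mod BL0)" unfolding f3_def
    proof (rule Fq_surj[OF Q4])
      fix z assume z: "z \<in> ZL0"
      then have zL: "z \<in> Inf L p" "p = 0 \<or> bd z = 0" using ZL0_iff by blast+
      then have "z \<in> Inf H p" using ILH by blast
      then obtain d where d: "d \<in> Inf H n" "z = bd d" using Vp zL by blast
      have "d \<in> ZKL" using d zL ZKL_iff IHK by blast
      moreover have "bd d - z \<in> BL0" using d BL00 by simp
      ultimately show "\<exists>c\<in>ZKL. bd c - z \<in> BL0" by blast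
    qed
  qed
  have kerf: "kernel (AG ZKL Mod BKL) (AG ZL0 Mod BL0) f3 = g3 ` carrier (AG ZK0 Mod BK0)"
    unfolding f3_def g3_def Fq_kernel[OF Q4] Fq_image[OF Q3]
  proof (intro equalityI subsetI)
    fix X assume "X \<in> {BKL #>\<^bsub>AG ZKL\<^esub> c |c. c \<in> ZKL \<and> bd c \<in> BL0}"
    then obtain c where c: "c \<in> ZKL" "bd c \<in> BL0" "X = BKL #>\<^bsub>AG ZKL\<^esub> c" by blast
    then obtain e where e: "e \<in> Inf L n" "bd c = bd e" using BL0_iff by blast
    have cK: "c \<in> Inf K n" using c ZKL_iff by blast
    have eK: "e \<in> Inf K n" using e ILK by blast
    have "c - e \<in> ZK0" unfolding ZK0_iff using Inf_diff[OF cK eK] bd_diff_Inf[OF cK eK] e by simp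
    moreover have "BKL #>\<^bsub>AG ZKL\<^esub> c = BKL #>\<^bsub>AG ZKL\<^esub> id (c - e)"
    proof -
      have "e \<in> BKL" unfolding BKL_def using e(1) by (rule bounds_of_inf)
      then have "c - (c - e) \<in> BKL" by simp
      then show ?thesis using AG_rcos_eq[OF qsetupD(5)[OF Q3]] by simp
    qed
    ultimately show "X \<in> {BKL #>\<^bsub>AG ZKL\<^esub> id c |c. c \<in> ZK0}" using c(3) by blast
  next
    fix X assume "X \<in> {BKL #>\<^bsub>AG ZKL\<^esub> id c |c. c \<in> ZK0}"
    then obtain c where c: "c \<in> ZK0" "X = BKL #>\<^bsub>AG ZKL\<^esub> c" by auto
    have "c \<in> ZKL" using c qsetupD(7)[OF Q3] by simp
    moreover have "bd c \<in> BL0" using c ZK0_iff BL00 by simp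
    ultimately show "X \<in> {BKL #>\<^bsub>AG ZKL\<^esub> c |c. c \<in> ZKL \<and> bd c \<in> BL0}" using c(2) by blast
  qed
  have ses3: "short_exact_sequence (AG ZL0 Mod BL0) (AG ZKL Mod BKL) (AG ZK0 Mod BK0) f3 g3"
  proof -
    have "group_hom (AG ZK0 Mod BK0) (AG ZKL Mod BKL) g3"
      unfolding group_hom_def group_hom_axioms_def using grp g3h by blast
    then have "exact_seq ([AG ZL0 Mod BL0, AG ZKL Mod BKL, AG ZK0 Mod BK0], [f3, g3])"
      using grp f3h kerf by simp
    then show ?thesis using f3e g3m short_exact_sequence_iff by blast
  qed

  have b: "inv_into (carrier (AG ZHL Mod BHL)) \<phi>2 \<in> iso (AG ZL0 Mod BL0) (AG ZHL Mod BHL)"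
    by (rule group.iso_set_sym[OF grp(4) iso2])
  have c: "inv_into (carrier (AG ZK0 Mod BK0)) \<phi>1 \<in> iso (AG ZKH Mod BKH) (AG ZK0 Mod BK0)"
    by (rule group.iso_set_sym[OF grp(1) iso1])
  have ses4: "short_exact_sequence (AG ZHL Mod BHL) (AG ZKL Mod BKL) (AG ZKH Mod BKH)
      (inv_into (carrier (AG ZHL Mod BHL)) \<phi>2 \<circ> f3) (g3 \<circ> inv_into (carrier (AG ZK0 Mod BK0)) \<phi>1)"
    by (rule SES_transport[OF ses3 b c grp(4) grp(2)])

  have E: "emb_homology K n = AG ZK0 Mod BK0" "rel_emb_homology K H n = AG ZKH Mod BKH"
    "rel_emb_homology K L n = AG ZKL Mod BKL" "rel_emb_homology H L n = AG ZHL Mod BHL"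
    "emb_homology L (n - 1) = AG ZL0 Mod BL0"
    unfolding emb_homology_def homology_eq ZK0_def BK0_def ZKH_def BKH_def ZKL_def BKL_def
      ZHL_def BHL_def ZL0_def BL0_def np by simp_all
  have i1: "(rel_emb_homology K H n :: ('v set \<Rightarrow> 'g) set monoid) \<cong> (emb_homology K n :: ('v set \<Rightarrow> 'g) set monoid)"
    using group.iso_sym[OF grp(1) is_isoI[OF iso1]] by (simp only: E)
  have i2: "(rel_emb_homology H L n :: ('v set \<Rightarrow> 'g) set monoid) \<cong> (emb_homology L (n - 1) :: ('v set \<Rightarrow> 'g) set monoid)"
    using is_isoI[OF iso2] by (simp only: E)
  have i3: "\<exists>f g. short_exact_sequence (emb_homology L (n - 1) :: ('v set \<Rightarrow> 'g) set monoid)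
        (rel_emb_homology K L n) (emb_homology K n) f g"
    using ses3 by (simp only: E) blast
  have i4: "\<exists>f g. short_exact_sequence (rel_emb_homology H L n :: ('v set \<Rightarrow> 'g) set monoid)
        (rel_emb_homology K L n) (rel_emb_homology K H n) f g"
    using ses4 by (simp only: E) blast
  show "(rel_emb_homology (assoc_complex H) H n :: ('v set \<Rightarrow> 'g) set monoid)
        \<cong> (emb_homology (assoc_complex H) n :: ('v set \<Rightarrow> 'g) set monoid)
   \<and> (rel_emb_homology H (lower_complex H) n :: ('v set \<Rightarrow> 'g) set monoid)
        \<cong> (emb_homology (lower_complex H) (n - 1) :: ('v set \<Rightarrow> 'g) set monoid)
   \<and> (\<exists>f g. short_exact_sequence
        (emb_homology (lower_complex H) (n - 1) :: ('v set \<Rightarrow> 'g) set monoid)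
        (rel_emb_homology (assoc_complex H) (lower_complex H) n)
        (emb_homology (assoc_complex H) n) f g)
   \<and> (\<exists>f g. short_exact_sequence
        (rel_emb_homology H (lower_complex H) n :: ('v set \<Rightarrow> 'g) set monoid)
        (rel_emb_homology (assoc_complex H) (lower_complex H) n)
        (rel_emb_homology (assoc_complex H) H n) f g)"
    using i1 i2 i3 i4 unfolding K_def L_def by blast
qed

end
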